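(* Let $\alpha\in[0,1)$, let $r>1/2$, and let $$X(\sqrt{t},\alpha)=\{\sqrt{n}\,e^{2\pi i n\alpha}\ :\ n\in\mathbb{N}\}\subset\mathbb{C}.$$ Consider, for a real number $m$ and $\beta\in[0,1)$, the system $$m-3r\sqrt{m}\le n\le m+3r\sqrt{m},\qquad \|n\alpha-\beta\|\le \frac{r}{2\sqrt{m}}\qquad (\ast)$$ in the unknown $n\in\mathbb{N}$. If $X(\sqrt{t},\alpha)$ is $r$-relatively dense, then for every real $m\ge16r^2$ and every $\beta\in[0,1)$ the system $(\ast)$ has a solution $n\in\mathbb{N}$. Conversely, if $(\ast)$ has a solution $n\in\mathbb{N}$ for every real $m\ge16r^2$ and every $\beta\in[0,1)$, then $X(\sqrt{t},\alpha)$ is $6r$-relatively dense.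
   Context: $\|x\|=\min_{i\in\mathbb{Z}}|x-i|$ denotes the distance from $x$ to the nearest integer. $B(x,r)$ denotes the open disk in $\mathbb{C}$ of radius $r$ centered at $x$. A set $X\subset\mathbb{C}$ is $r$-relatively dense if $B(x,r)\cap X\neq\emptyset$ for every $x\in\mathbb{C}$. *)

theory Defs
  imports "HOL-Analysis.Analysis"
begin

definition dist_int :: "real \<Rightarrow> real" where
  "dist_int x = (INF i::int. \<bar>x - of_int i\<bar>)"

definition rel_dense :: "real \<Rightarrow> complex set \<Rightarrow> bool" where
  "rel_dense r X \<longleftrightarrow> (\<forall>x. ball x r \<inter> X \<noteq> {})"

definition Xsqrt :: "real \<Rightarrow> complex set" where
  "Xsqrt \<alpha> = {complex_of_real (sqrt (real n)) * exp (2 * pi * \<i> * of_real (real n * \<alpha>)) | n::nat. n \<ge> 1}"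

definition sys :: "real \<Rightarrow> real \<Rightarrow> real \<Rightarrow> real \<Rightarrow> nat \<Rightarrow> bool" where
  "sys \<alpha> r m \<beta> n \<longleftrightarrow>
     m - 3 * r * sqrt m \<le> real n \<and> real n \<le> m + 3 * r * sqrt m \<and>
     dist_int (real n * \<alpha> - \<beta>) \<le> r / (2 * sqrt m)"

end

theory Submission
  imports Defs
begin

definition E :: "real \<Rightarrow> complex" where "E x = exp (\<i> * of_real (2*pi*x))"

lemma dist_int_round: "dist_int x = \<bar>x - of_int (round x)\<bar>"
proof -
  have bdd: "bdd_below (range (\<lambda>i::int. \<bar>x - of_int i\<bar>))" by (auto intro: bdd_belowI[of _ 0])
  have "dist_int x \<le> \<bar>x - of_int (round x)\<bar>" unfolding dist_int_def
    by (rule cINF_lower[OF bdd]) simp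
  moreover have "\<bar>x - of_int (round x)\<bar> \<le> dist_int x" unfolding dist_int_def
    by (rule cINF_greatest) (auto simp: round_diff_minimal)
  ultimately show ?thesis by simp
qed

lemma E_shift: "E x = E (x - of_int k)"
proof -
  have "E x = exp (\<i> * of_real (2*pi*(x - of_int k)) + \<i> * (of_int k * (of_real pi * 2)))"
    unfolding E_def by (rule arg_cong[where f=exp]) (simp add: algebra_simps)
  also have "\<dots> = E (x - of_int k)" unfolding E_def by (rule exp_plus_2pin)
  finally show ?thesis .
qed

lemma norm_E_abs: "cmod (E x - 1) = 2 * \<bar>sin (pi * (x - of_int (round x)))\<bar>"
proof -
  have "cmod (E x - 1) = cmod (E (x - of_int (round x)) - 1)" using E_shift by metis
  also have "\<dots> = 2 * \<bar>sin (2*pi*(x - of_int (round x)) / 2)\<bar>" unfolding E_def by (rule dist_exp_i_1)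
  finally show ?thesis by simp
qed

lemma norm_E_upper: "cmod (E x - 1) \<le> 2 * pi * dist_int x"
proof -
  have "\<bar>sin (pi * (x - of_int (round x)))\<bar> \<le> \<bar>pi * (x - of_int (round x))\<bar>" by (rule abs_sin_x_le_abs_x)
  thus ?thesis unfolding norm_E_abs dist_int_round by (simp add: abs_mult)
qed

lemma sin_lower: "(x::real) - \<bar>x\<bar>^3/6 \<le> sin x"
proof -
  have 1: "\<bar>sin x - (\<Sum>m<3. sin_coeff m * x ^ m)\<bar> \<le> inverse (fact 3) * \<bar>x\<bar> ^ 3" by (rule Maclaurin_sin_bound)
  have 2: "(\<Sum>m<3. sin_coeff m * x ^ m) = x" by (simp add: sin_coeff_def numeral_3_eq_3)
  have f: "(fact 3::real) = 6" by (simp add: numeral_3_eq_3)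
  have 3: "inverse (fact 3) * \<bar>x\<bar> ^ 3 = \<bar>x\<bar>^3/(6::real)" unfolding f by simp
  show ?thesis using 1 unfolding 2 3 by linarith
qed

lemma norm_E_lower:
  assumes "cmod (E x - 1) < 1/2"
  shows "4 * dist_int x \<le> cmod (E x - 1)"
proof -
  define y where "y = x - of_int (round x)"
  define t where "t = pi * \<bar>y\<bar>"
  have y: "\<bar>y\<bar> \<le> 1/2" unfolding y_def using of_int_round_abs_le[of x] by linarith
  have t0: "0 \<le> t" unfolding t_def by simp
  have "pi * \<bar>y\<bar> \<le> pi * (1/2)" using y pi_gt_zero by (intro mult_left_mono) auto
  hence t1: "t \<le> pi/2" unfolding t_def by simp
  have "pi * y = t \<or> pi * y = - t" unfolding t_def by (cases "y \<ge> 0") auto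
  hence "\<bar>sin (pi * y)\<bar> = \<bar>sin t\<bar>" by (metis abs_minus_cancel sin_minus)
  also have "\<bar>sin t\<bar> = sin t" using sin_ge_zero[of t] t0 t1 pi_gt_zero by linarith
  finally have st: "\<bar>sin (pi * y)\<bar> = sin t" .
  have n: "cmod (E x - 1) = 2 * sin t" using norm_E_abs[of x] st unfolding y_def by linarith
  have "t \<le> 1"
  proof (rule ccontr)
    assume "\<not> t \<le> 1"
    hence "sin 1 \<le> sin t" using sin_mono_le_eq[of 1 t] t1 pi_gt3 by linarith
    moreover have "1 - 1/6 \<le> sin (1::real)" using sin_lower[of 1] by simp
    ultimately show False using assms n by linarith
  qed
  have "t - t^3/6 \<le> sin t" using sin_lower[of t] t0 by simp
  moreover have "t^3 \<le> t" using t0 \<open>t \<le> 1\<close> power_decreasing[of 1 3 t] by simp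
  ultimately have "5/6 * t \<le> sin t" by linarith
  hence "5/3 * pi * \<bar>y\<bar> \<le> cmod (E x - 1)" using n unfolding t_def by linarith
  moreover have "4 * \<bar>y\<bar> \<le> 5/3 * pi * \<bar>y\<bar>" using pi_gt3 by (intro mult_right_mono) auto
  moreover have "dist_int x = \<bar>y\<bar>" unfolding y_def by (rule dist_int_round)
  ultimately show ?thesis by linarith
qed


lemma E_norm [simp]: "cmod (E x) = 1" unfolding E_def by (rule norm_exp_i_times)

lemma E_diff: "E x = E y * E (x - y)"
  unfolding E_def by (simp add: exp_add[symmetric] algebra_simps)

lemma norm_E_diff: "cmod (E x - E y) = cmod (E (x - y) - 1)"
proof -
  have "E x - E y = E y * (E (x - y) - 1)" using E_diff[of x y] by (simp add: algebra_simps)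
  thus ?thesis by (simp add: norm_mult)
qed

lemma Xsqrt_E: "Xsqrt \<alpha> = {complex_of_real (sqrt (real n)) * E (real n * \<alpha>) | n::nat. n \<ge> 1}"
  unfolding Xsqrt_def E_def by (simp add: algebra_simps)

lemma part1:
  fixes \<alpha> r m \<beta> :: real
  assumes r: "r > 1/2" and D: "rel_dense r (Xsqrt \<alpha>)" and m: "m \<ge> 16 * r^2"
  shows "\<exists>n::nat. n \<ge> 1 \<and> sys \<alpha> r m \<beta> n"
proof -
  define b where "b = sqrt m"
  have "sqrt (16 * r^2) = 4 * r" using r by (simp add: real_sqrt_mult)
  hence b4: "4 * r \<le> b" unfolding b_def using m real_sqrt_le_mono by metis
  have m0: "m \<ge> 0" using m by (smt (verit) zero_le_power2)
  have bb: "b * b = m" unfolding b_def using m0 by simp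
  define z where "z = complex_of_real b * E \<beta>"
  from D have "ball z r \<inter> Xsqrt \<alpha> \<noteq> {}" unfolding rel_dense_def by blast
  then obtain w where wb: "w \<in> ball z r" and wX: "w \<in> Xsqrt \<alpha>" by blast
  from wX obtain n :: nat where n1: "n \<ge> 1" and w: "w = complex_of_real (sqrt (real n)) * E (real n * \<alpha>)"
    unfolding Xsqrt_E by blast
  define a where "a = sqrt (real n)"
  have a0: "a \<ge> 0" unfolding a_def by simp
  have aa: "a * a = real n" unfolding a_def by simp
  define u where "u = E (real n * \<alpha>)"
  define v where "v = E \<beta>"
  have dw: "cmod (complex_of_real a * u - complex_of_real b * v) < r"
    using wb unfolding w z_def a_def u_def v_def by (simp add: dist_norm norm_minus_commute)
  have "\<bar>cmod (complex_of_real a * u) - cmod (complex_of_real b * v)\<bar> \<le> cmod (complex_of_real a * u - complex_of_real b * v)"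
    by (rule norm_triangle_ineq3)
  moreover have "cmod (complex_of_real a * u) = a" using a0 unfolding u_def by (simp add: norm_mult)
  moreover have "cmod (complex_of_real b * v) = b" using b4 r unfolding v_def by (simp add: norm_mult)
  ultimately have ab: "\<bar>a - b\<bar> < r" using dw by linarith
  define c where "c = cmod (E (real n * \<alpha> - \<beta>) - 1)"
  have "complex_of_real b * (u - v) = (complex_of_real b - complex_of_real a) * u + (complex_of_real a * u - complex_of_real b * v)"
    by (simp add: algebra_simps)
  hence "cmod (complex_of_real b * (u - v)) \<le> cmod ((complex_of_real b - complex_of_real a) * u) + cmod (complex_of_real a * u - complex_of_real b * v)"
    by (metis norm_triangle_ineq)
  moreover have "cmod (complex_of_real b * (u - v)) = b * c"
    using b4 r unfolding c_def u_def v_def by (simp add: norm_mult norm_E_diff)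
  moreover have "cmod ((complex_of_real b - complex_of_real a) * u) = \<bar>a - b\<bar>"
    unfolding u_def by (simp add: norm_mult flip: of_real_diff)
  ultimately have bc: "b * c < 2 * r" using ab dw by linarith
  have bpos: "b > 0" using b4 r by linarith
  have c2: "c < 2 * r / b" using bc bpos by (simp add: field_simps)
  have "2 * r / b \<le> 1/2" using b4 bpos by (simp add: field_simps)
  hence "4 * dist_int (real n * \<alpha> - \<beta>) \<le> c" unfolding c_def using c2 by (intro norm_E_lower) (simp add: c_def)
  hence "b * (4 * dist_int (real n * \<alpha> - \<beta>)) \<le> b * c" using bpos by (intro mult_left_mono) auto
  moreover have "b * (4 * dist_int (real n * \<alpha> - \<beta>)) = 2 * (dist_int (real n * \<alpha> - \<beta>) * (2 * b))"
    by (simp add: algebra_simps)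
  ultimately have "dist_int (real n * \<alpha> - \<beta>) * (2 * b) \<le> r" using bc by linarith
  hence dd: "dist_int (real n * \<alpha> - \<beta>) \<le> r / (2 * sqrt m)" using bpos unfolding b_def[symmetric]
    by (subst pos_le_divide_eq) auto
  have rb: "r * r \<le> r * b" using b4 r by (intro mult_left_mono) auto
  have up: "a \<le> b + r" using ab by linarith
  have "a * a \<le> (b + r) * (b + r)" using up a0 by (intro mult_mono) auto
  hence n_up: "real n \<le> m + 3 * r * sqrt m" unfolding aa b_def[symmetric] using bb rb by (simp add: algebra_simps)
  have lo: "b - r \<le> a" using ab by linarith
  have "(b - r) * (b - r) \<le> a * a" using lo b4 r by (intro mult_mono) auto
  moreover have "(b - r) * (b - r) = m - 2 * r * b + r * r" using bb by (simp add: algebra_simps)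
  moreover have "r * b \<ge> 0" using r bpos by simp
  moreover have "r * r \<ge> 0" by simp
  ultimately have n_lo: "m - 3 * r * sqrt m \<le> real n" unfolding aa b_def[symmetric] by linarith
  show ?thesis using n1 n_up n_lo dd unfolding sys_def by blast
qed


lemma sq_ge_imp:
  assumes "(x::real) \<ge> 0" "y \<ge> 0" "y * y \<le> x * x" shows "y \<le> x"
proof (rule ccontr)
  assume "\<not> y \<le> x"
  hence "x < y" by simp
  hence "x * x < y * y" using assms(1) by (intro mult_strict_mono) auto
  thus False using assms(3) by simp
qed

lemma sq_lt_imp:
  assumes "(x::real) \<ge> 0" "y \<ge> 0" "y * y < x * x" shows "y < x"
proof (rule ccontr)
  assume "\<not> y < x"
  hence "x \<le> y" by simp
  hence "x * x \<le> y * y" using assms(1) by (intro mult_mono) auto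
  thus False using assms(3) by simp
qed

lemma part2:
  fixes \<alpha> r :: real
  assumes r: "r > 1/2"
    and H: "\<forall>m::real. m \<ge> 16 * r^2 \<longrightarrow> (\<forall>\<beta>::real. 0 \<le> \<beta> \<and> \<beta> < 1 \<longrightarrow> (\<exists>n::nat. n \<ge> 1 \<and> sys \<alpha> r m \<beta> n))"
  shows "rel_dense (6 * r) (Xsqrt \<alpha>)"
  unfolding rel_dense_def
proof
  fix z :: complex
  define s where "s = cmod z"
  have s0: "s \<ge> 0" unfolding s_def by simp
  define \<beta> where "\<beta> = Arg2pi z / (2 * pi)"
  have \<beta>0: "0 \<le> \<beta>" unfolding \<beta>_def using Arg2pi_ge_0[of z] by simp
  have \<beta>1: "\<beta> < 1" unfolding \<beta>_def using Arg2pi_lt_2pi[of z] by (simp add: field_simps)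
  have "E \<beta> = exp (\<i> * of_real (Arg2pi z))" unfolding E_def \<beta>_def by simp
  hence hz: "z = complex_of_real s * E \<beta>" unfolding s_def using Arg2pi_eq[of z] by simp
  define m where "m = max (s^2) (16 * r^2)"
  have m16: "m \<ge> 16 * r^2" unfolding m_def by simp
  obtain n :: nat where n1: "n \<ge> 1" and sy: "sys \<alpha> r m \<beta> n" using H m16 \<beta>0 \<beta>1 by blast
  define b where "b = sqrt m"
  have m0: "m \<ge> 0" using m16 by (smt (verit) zero_le_power2)
  have bb: "b * b = m" unfolding b_def using m0 by simp
  have "sqrt (16 * r^2) = 4 * r" using r by (simp add: real_sqrt_mult)
  hence b4: "4 * r \<le> b" unfolding b_def using m16 real_sqrt_le_mono by metis
  have bpos: "b > 0" using b4 r by linarith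
  define a where "a = sqrt (real n)"
  have a0: "a \<ge> 0" unfolding a_def by simp
  have aa: "a * a = real n" unfolding a_def by simp
  define d where "d = dist_int (real n * \<alpha> - \<beta>)"
  have nlo: "m - 3 * r * b \<le> a * a" and nup: "a * a \<le> m + 3 * r * b" and dd: "d \<le> r / (2 * b)"
    using sy unfolding sys_def aa b_def d_def by auto
  define u where "u = E (real n * \<alpha>)"
  define v where "v = E \<beta>"
  define c where "c = cmod (v - u)"
  have "c = cmod (E (real n * \<alpha> - \<beta>) - 1)" unfolding c_def u_def v_def
    by (metis norm_E_diff norm_minus_commute)
  hence c1: "c \<le> 2 * pi * d" using norm_E_upper unfolding d_def by simp
  have "2 * pi * d \<le> 2 * pi * (r / (2 * b))" using dd by (intro mult_left_mono) auto
  hence "c \<le> pi * r / b" using c1 by simp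
  hence bc: "b * c \<le> pi * r" using bpos by (simp add: field_simps)
  define w where "w = complex_of_real a * u"
  have wX: "w \<in> Xsqrt \<alpha>" unfolding Xsqrt_E w_def a_def u_def using n1 by blast
  have "z - w = complex_of_real s * (v - u) + (complex_of_real s - complex_of_real a) * u"
    unfolding hz w_def v_def by (simp add: algebra_simps)
  hence "cmod (z - w) \<le> cmod (complex_of_real s * (v - u)) + cmod ((complex_of_real s - complex_of_real a) * u)"
    by (metis norm_triangle_ineq)
  moreover have "cmod (complex_of_real s * (v - u)) = s * c" unfolding c_def using s0 by (simp add: norm_mult)
  moreover have "cmod ((complex_of_real s - complex_of_real a) * u) = \<bar>s - a\<bar>"
    unfolding u_def by (simp add: norm_mult flip: of_real_diff)
  ultimately have dz: "dist z w \<le> s * c + \<bar>s - a\<bar>" by (simp add: dist_norm)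
  have "dist z w < 6 * r"
  proof (cases "s \<ge> 4 * r")
    case True
    have "(4 * r)^2 \<le> s^2" using True r by (intro power_mono) auto
    hence "s^2 \<ge> 16 * r^2" by (simp add: power_mult_distrib)
    hence "m = s^2" unfolding m_def by simp
    hence bs: "b = s" unfolding b_def using s0 by simp
    have sc: "s * c \<le> pi * r" using bc bs by simp
    have "(4 * r) * b \<le> b * b" using b4 bpos by (intro mult_right_mono) auto
    hence rb: "r * b \<le> b * b / 4" by simp
    have "b * b / 4 \<le> a * a" using nlo rb bb by linarith
    hence "(b/2) * (b/2) \<le> a * a" by simp
    hence ab2: "b / 2 \<le> a" using sq_ge_imp[of a "b/2"] a0 bpos by simp
    have fa: "a * a - b * b = (a - b) * (a + b)" by (simp add: algebra_simps)
    have "\<bar>a + b\<bar> = a + b" using a0 bpos by simp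
    hence "\<bar>a - b\<bar> * (a + b) = \<bar>a * a - b * b\<bar>" unfolding fa abs_mult by simp
    also have "\<dots> \<le> 3 * r * b" using nlo nup bb by linarith
    finally have e1: "\<bar>a - b\<bar> * (a + b) \<le> 3 * r * b" .
    have "\<bar>a - b\<bar> * (3/2 * b) \<le> \<bar>a - b\<bar> * (a + b)" using ab2 by (intro mult_left_mono) auto
    moreover have "(2 * r) * (3/2 * b) = 3 * r * b" by simp
    ultimately have "\<bar>a - b\<bar> * (3/2 * b) \<le> (2 * r) * (3/2 * b)" using e1 by linarith
    hence "\<bar>a - b\<bar> \<le> 2 * r" using bpos by (subst (asm) mult_le_cancel_right) auto
    hence "\<bar>s - a\<bar> \<le> 2 * r" using bs by simp
    moreover have "pi * r < 4 * r" using pi_less_4 r by (intro mult_strict_right_mono) auto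
    ultimately show ?thesis using dz sc r by linarith
  next
    case False
    hence "s^2 < (4 * r)^2" using s0 r by (intro power_strict_mono) auto
    hence "s^2 < 16 * r^2" by (simp add: power_mult_distrib)
    hence "m = 16 * r^2" unfolding m_def by simp
    hence bs: "b = 4 * r" unfolding b_def using r by (simp add: real_sqrt_mult)
    hence "c * (4 * r) \<le> pi * r" using bc by (simp add: mult.commute)
    hence "c * 4 \<le> pi" using r by simp
    hence "s * (c * 4) \<le> s * pi" using s0 by (intro mult_left_mono) auto
    moreover have "s * pi \<le> s * 4" using s0 pi_less_4 by (intro mult_left_mono) auto
    ultimately have sc: "s * c \<le> s * pi / 4" and sc4: "s * pi / 4 \<le> s" by simp_all
    have m': "m = 16 * (r * r)" using \<open>m = 16 * r^2\<close> by (simp add: power2_eq_square)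
    have e3: "3 * r * b = 12 * (r * r)" using bs by simp
    have e2: "(2 * r) * (2 * r) = 4 * (r * r)" by simp
    have e6: "(6 * r) * (6 * r) = 36 * (r * r)" by simp
    have rr: "r * r > 0" using r by simp
    have "(2 * r) * (2 * r) \<le> a * a" using nlo m' e3 e2 by linarith
    hence a2: "2 * r \<le> a" using sq_ge_imp[of a "2*r"] a0 r by simp
    have "a * a < (6 * r) * (6 * r)" using nup m' e3 e6 rr by linarith
    hence a6: "a < 6 * r" using sq_lt_imp[of "6*r" a] a0 r by simp
    show ?thesis
    proof (cases "a \<ge> s")
      case True
      thus ?thesis using dz sc sc4 a6 by linarith
    next
      case False
      thus ?thesis using dz sc sc4 a2 \<open>\<not> s \<ge> 4 * r\<close> by linarith
    qed
  qed
  thus "ball z (6 * r) \<inter> Xsqrt \<alpha> \<noteq> {}" using wX by auto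
qed


theorem lemma6:
  fixes \<alpha> r :: real
  assumes "0 \<le> \<alpha>" "\<alpha> < 1" "r > 1/2"
  shows "(rel_dense r (Xsqrt \<alpha>) \<longrightarrow>
            (\<forall>m::real. m \<ge> 16 * r^2 \<longrightarrow> (\<forall>\<beta>::real. 0 \<le> \<beta> \<and> \<beta> < 1 \<longrightarrow>
               (\<exists>n::nat. n \<ge> 1 \<and> sys \<alpha> r m \<beta> n))))
       \<and> ((\<forall>m::real. m \<ge> 16 * r^2 \<longrightarrow> (\<forall>\<beta>::real. 0 \<le> \<beta> \<and> \<beta> < 1 \<longrightarrow>
               (\<exists>n::nat. n \<ge> 1 \<and> sys \<alpha> r m \<beta> n)))
            \<longrightarrow> rel_dense (6 * r) (Xsqrt \<alpha>))"
  using part1[OF assms(3)] part2[OF assms(3)] by blast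

end
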